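(* Let $\Omega\subset\mathbb R^N$ be open and let $T:\Omega\to\mathbb R$ be continuous and such that $\mathrm{epi}(T)$ has locally positive reach. Let $\bar x\in\Omega$. Then $T$ is non-Lipschitz at $\bar x$ if and only if there exists a nonzero vector $\zeta\in\mathbb R^N$ such that $(\zeta,0)\in N_{\mathrm{epi}(T)}(\bar x,T(\bar x))$.
   Context: $\mathrm{epi}(T)=\{(x,y)\in\Omega\times\mathbb R: y\ge T(x)\}$. For a closed set $K$ and $z\in K$, $v\in N_K(z)$ (proximal normal cone) iff there is $\sigma\ge0$ with $\langle v,w-z\rangle\le\sigma\|w-z\|^2$ for all $w\in K$. A locally closed set $K$ has locally positive reach if there is a continuous $\varphi:K\to[0,\infty)$ with $\langle v,w-z\rangle\le\varphi(z)\|v\|\|w-z\|^2$ for all $z,w\in K$ and $v\in N_K(z)$. $T$ is non-Lipschitz at $x$ if there exist sequences $x_i\to x$, $y_i\to x$ with $x_i\neq y_i$ and $\limsup_{i\to\infty}|T(y_i)-T(x_i)|/\|y_i-x_i\|=+\infty$. *)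

theory Defs
  imports "HOL-Analysis.Analysis"
begin

definition epi :: "'a set \<Rightarrow> ('a \<Rightarrow> real) \<Rightarrow> ('a \<times> real) set" where
  "epi \<Omega> T = {(x, y). x \<in> \<Omega> \<and> y \<ge> T x}"

definition proximal_normal :: "'b::real_inner set \<Rightarrow> 'b \<Rightarrow> 'b set" where
  "proximal_normal K z = {v. z \<in> K \<and> (\<exists>\<sigma>\<ge>0. \<forall>w\<in>K. inner v (w - z) \<le> \<sigma> * (norm (w - z))\<^sup>2)}"

definition locally_closed_set :: "'b::metric_space set \<Rightarrow> bool" where
  "locally_closed_set K \<longleftrightarrow> (\<forall>z\<in>K. \<exists>r>0. closed (K \<inter> cball z r))"

definition locally_positive_reach :: "'b::real_inner set \<Rightarrow> bool" where
  "locally_positive_reach K \<longleftrightarrow> locally_closed_set K \<and>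
     (\<exists>\<phi>::'b \<Rightarrow> real. continuous_on K \<phi> \<and> (\<forall>z\<in>K. \<phi> z \<ge> 0) \<and>
        (\<forall>z\<in>K. \<forall>w\<in>K. \<forall>v\<in>proximal_normal K z.
            inner v (w - z) \<le> \<phi> z * norm v * (norm (w - z))\<^sup>2))"

definition non_lipschitz_at :: "'a::real_normed_vector set \<Rightarrow> ('a \<Rightarrow> real) \<Rightarrow> 'a \<Rightarrow> bool" where
  "non_lipschitz_at \<Omega> T x \<longleftrightarrow>
     (\<exists>xs ys :: nat \<Rightarrow> 'a. (\<forall>i. xs i \<in> \<Omega> \<and> ys i \<in> \<Omega> \<and> xs i \<noteq> ys i) \<and>
        xs \<longlonglongrightarrow> x \<and> ys \<longlonglongrightarrow> x \<and>
        limsup (\<lambda>i. ereal (\<bar>T (ys i) - T (xs i)\<bar> / norm (ys i - xs i))) = \<infinity>)"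

end

theory Submission
  imports Defs
begin


lemma nearest_exists:
  fixes K :: "'b::euclidean_space set"
  assumes "z \<in> K" "r > 0" "closed (K \<inter> cball z r)" "dist P z < r/2"
  obtains Q where "Q \<in> K" "\<forall>w\<in>K. dist P Q \<le> dist P w"
proof -
  obtain Q where Q: "Q \<in> K \<inter> cball z r" "\<And>y. y \<in> K \<inter> cball z r \<Longrightarrow> dist P Q \<le> dist P y"
  proof -
    have "K \<inter> cball z r \<noteq> {}" using assms(1,2) by auto
    from distance_attains_inf[OF assms(3) this, of P] show ?thesis using that by blast
  qed
  have "dist P Q \<le> dist P z" using Q(2)[of z] assms(1,2) by auto
  have "dist P Q \<le> dist P w" if "w \<in> K" for w
  proof (cases "w \<in> cball z r")
    case True then show ?thesis using Q(2) that by auto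
  next
    case False
    then have "dist z w > r" by auto
    then have "dist P w > r/2" using dist_triangle[of z w P] assms(4) by (simp add: dist_commute)
    then show ?thesis using \<open>dist P Q \<le> dist P z\<close> assms(4) by linarith
  qed
  then show ?thesis using that Q(1) by auto
qed

lemma nearest_normal:
  fixes K :: "'b::real_inner set"
  assumes "Q \<in> K" "\<forall>w\<in>K. dist P Q \<le> dist P w"
  shows "P - Q \<in> proximal_normal K Q"
proof -
  have "inner (P - Q) (w - Q) \<le> 1/2 * (norm (w - Q))\<^sup>2" if "w \<in> K" for w
  proof -
    have "(norm (P - Q))\<^sup>2 \<le> (norm (P - w))\<^sup>2"
      using assms(2) that by (simp add: dist_norm)
    also have "P - w = (P - Q) - (w - Q)" by simp
    finally show ?thesis by (simp add: power2_norm_eq_inner inner_diff_left inner_diff_right inner_commute algebra_simps)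
  qed
  then show ?thesis unfolding proximal_normal_def using assms(1)
    by (intro CollectI conjI exI[of _ "1/2"]) auto
qed

lemma nearest_infdist:
  fixes K :: "'b::metric_space set"
  assumes "Q \<in> K" "\<forall>w\<in>K. dist P Q \<le> dist P w"
  shows "infdist P K = dist P Q"
proof (rule antisym)
  show "infdist P K \<le> dist P Q" using infdist_le[OF assms(1)] .
  show "dist P Q \<le> infdist P K" unfolding infdist_notempty[of K P, OF] using assms
    by (subst infdist_notempty) (auto intro!: cINF_greatest)
qed

lemma normal_scale:
  assumes "v \<in> proximal_normal K z" "c \<ge> 0"
  shows "c *\<^sub>R v \<in> proximal_normal K z"
proof -
  obtain \<sigma> where s: "\<sigma> \<ge> 0" "\<forall>w\<in>K. inner v (w - z) \<le> \<sigma> * (norm (w - z))\<^sup>2" "z \<in> K"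
    using assms(1) unfolding proximal_normal_def by auto
  have "inner (c *\<^sub>R v) (w - z) \<le> (c * \<sigma>) * (norm (w - z))\<^sup>2" if "w \<in> K" for w
    using mult_left_mono[OF s(2)[rule_format, OF that] assms(2)] by simp
  then show ?thesis unfolding proximal_normal_def using s assms(2)
    by (intro CollectI conjI exI[of _ "c*\<sigma>"]) auto
qed



lemma norm_add_scale_sq:
  fixes v u :: "'b::real_inner"
  shows "(norm (v + h *\<^sub>R u))\<^sup>2 = (norm v)\<^sup>2 + 2 * h * inner v u + h\<^sup>2 * (norm u)\<^sup>2"
proof -
  have "(norm (v + h *\<^sub>R u))\<^sup>2 = inner (v + h *\<^sub>R u) (v + h *\<^sub>R u)" by (simp add: power2_norm_eq_inner)
  also have "\<dots> = inner v v + 2 * h * inner v u + h\<^sup>2 * inner u u"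
    by (simp add: inner_add_left inner_add_right inner_commute power2_eq_square)
  finally show ?thesis by (simp add: power2_norm_eq_inner)
qed

lemma path_lemma:
  fixes K :: "'b::euclidean_space set" and z u :: 'b
  assumes zK: "z \<in> K" and kp: "\<kappa> > 0"
    and near: "\<forall>s\<in>{0..1::real}. \<exists>Q\<in>K. \<forall>w\<in>K. dist (z + s *\<^sub>R u) Q \<le> dist (z + s *\<^sub>R u) w"
    and dec: "\<forall>s\<in>{0..1::real}. \<forall>Q\<in>K. (\<forall>w\<in>K. dist (z + s *\<^sub>R u) Q \<le> dist (z + s *\<^sub>R u) w)
               \<longrightarrow> z + s *\<^sub>R u \<noteq> Q \<longrightarrow> inner (z + s *\<^sub>R u - Q) u \<le> - \<kappa> * norm (z + s *\<^sub>R u - Q)"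
  shows "infdist (z + u) K = 0"
proof (rule ccontr)
  define f where "f s = infdist (z + s *\<^sub>R u) K" for s :: real
  assume "infdist (z + u) K \<noteq> 0"
  then have f1: "f 1 > 0" unfolding f_def using infdist_nonneg[of "z+u" K] by simp
  define \<epsilon> where "\<epsilon> = f 1 / 2"
  have ep: "\<epsilon> > 0" "\<epsilon> < f 1" using f1 unfolding \<epsilon>_def by auto
  have flip: "f t \<le> f s + \<bar>t - s\<bar> * norm u" for s t
  proof -
    have "f t \<le> f s + dist (z + t *\<^sub>R u) (z + s *\<^sub>R u)"
      unfolding f_def by (rule infdist_triangle)
    also have "dist (z + t *\<^sub>R u) (z + s *\<^sub>R u) = \<bar>t - s\<bar> * norm u"
      by (simp add: dist_norm scaleR_diff_left[symmetric])
    finally show ?thesis .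
  qed
  have contf: "continuous_on UNIV f" unfolding f_def
    by (intro continuous_intros)
  define S where "S = {0..1} \<inter> {t. f t \<le> \<epsilon>}"
  have "closed {t. f t \<le> \<epsilon>}" by (rule closed_Collect_le[OF contf]) (intro continuous_intros)
  then have "compact S" unfolding S_def by (intro compact_Int_closed) auto
  moreover have "0 \<in> S" unfolding S_def f_def using zK ep by simp
  ultimately obtain c where c: "c \<in> S" "\<And>t. t \<in> S \<Longrightarrow> t \<le> c"
    using compact_attains_sup[of S] by blast
  have c01: "0 \<le> c" "c < 1" using c(1) ep unfolding S_def by (auto simp: less_le)
  have fc: "f c = \<epsilon>"
  proof (rule ccontr)
    assume "f c \<noteq> \<epsilon>"
    then have lt: "f c < \<epsilon>" using c(1) unfolding S_def by auto
    define t where "t = min (c + (\<epsilon> - f c) / (norm u + 1)) 1"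
    have tc: "t > c" unfolding t_def using lt c01 by (auto intro!: divide_pos_pos add_nonneg_pos)
    have "\<bar>t - c\<bar> * norm u \<le> (\<epsilon> - f c) / (norm u + 1) * norm u"
      using tc unfolding t_def by (intro mult_right_mono) auto
    also have "\<dots> < \<epsilon> - f c"
    proof -
      have "norm u / (norm u + 1) < 1" by (simp add: add_nonneg_pos)
      then have "(\<epsilon> - f c) * (norm u / (norm u + 1)) < (\<epsilon> - f c) * 1"
        using lt by (intro mult_strict_left_mono) auto
      then show ?thesis by simp
    qed
    finally have "f t < \<epsilon>" using flip[of t c] by linarith
    then have "t \<in> S" unfolding S_def using c01 tc by (auto simp: t_def)
    then show False using c(2) tc by fastforce
  qed
  define P where "P = z + c *\<^sub>R u"
  obtain Q where Q: "Q \<in> K" "\<forall>w\<in>K. dist P Q \<le> dist P w"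
    using near c01 unfolding P_def by (meson atLeastAtMost_iff less_imp_le)
  have dPQ: "dist P Q = \<epsilon>" using nearest_infdist[OF Q] fc unfolding f_def P_def by simp
  then have "P \<noteq> Q" using ep by auto
  then have ip: "inner (P - Q) u \<le> - \<kappa> * \<epsilon>"
    using dec c01 Q dPQ unfolding P_def by (auto simp: dist_norm)
  define h where "h = min (1 - c) (\<kappa> * \<epsilon> / ((norm u)\<^sup>2 + 1))"
  have hp: "h > 0" unfolding h_def using c01 kp ep by (auto intro!: divide_pos_pos add_nonneg_pos)
  have hle: "h * (norm u)\<^sup>2 \<le> \<kappa> * \<epsilon>"
  proof -
    have "h * (norm u)\<^sup>2 \<le> \<kappa> * \<epsilon> / ((norm u)\<^sup>2 + 1) * (norm u)\<^sup>2"
      unfolding h_def by (intro mult_right_mono) auto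
    also have "\<dots> = (\<kappa> * \<epsilon>) * ((norm u)\<^sup>2 / ((norm u)\<^sup>2 + 1))" by simp
    also have "\<dots> \<le> (\<kappa> * \<epsilon>) * 1"
      using kp ep by (intro mult_left_mono) (auto simp: divide_le_eq_1 add_nonneg_pos)
    also have "\<dots> = \<kappa> * \<epsilon>" by simp
    finally show ?thesis .
  qed
  have e: "z + (c + h) *\<^sub>R u - Q = (P - Q) + h *\<^sub>R u" unfolding P_def by (simp add: algebra_simps)
  have fch: "f (c + h) \<le> norm ((P - Q) + h *\<^sub>R u)"
    using infdist_le[OF Q(1), of "z + (c + h) *\<^sub>R u"] e unfolding f_def by (metis dist_norm)
  have "(norm ((P - Q) + h *\<^sub>R u))\<^sup>2 = \<epsilon>\<^sup>2 + 2 * h * inner (P - Q) u + h\<^sup>2 * (norm u)\<^sup>2"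
    using dPQ norm_add_scale_sq[of "P - Q" h u] by (simp add: dist_norm)
  also have "\<dots> \<le> \<epsilon>\<^sup>2 - 2 * h * \<kappa> * \<epsilon> + h * (\<kappa> * \<epsilon>)"
  proof -
    have "2 * h * inner (P - Q) u \<le> 2 * h * (- \<kappa> * \<epsilon>)" using ip hp by (intro mult_left_mono) auto
    moreover have "h\<^sup>2 * (norm u)\<^sup>2 \<le> h * (\<kappa> * \<epsilon>)"
      using mult_left_mono[OF hle, of h] hp by (simp add: power2_eq_square algebra_simps)
    ultimately show ?thesis by (simp add: algebra_simps)
  qed
  also have "\<dots> < \<epsilon>\<^sup>2" using hp kp ep by (simp add: algebra_simps)
  finally have "norm ((P - Q) + h *\<^sub>R u) < \<epsilon>"
    using ep by (smt (verit) norm_ge_zero power_mono)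
  then have "f (c + h) \<le> \<epsilon>" using fch by simp
  then have "c + h \<in> S" unfolding S_def using hp c01 h_def by auto
  then show False using c(2) hp by fastforce
qed



lemma core_step:
  fixes \<Omega> :: "'a::euclidean_space set" and T :: "'a \<Rightarrow> real"
  assumes xb: "xbar \<in> \<Omega>" and rp: "r > 0" and cl: "closed (epi \<Omega> T \<inter> cball (xbar, T xbar) r)"
    and eta: "\<eta> > 0" "20 * \<eta> \<le> \<epsilon>" "20 * \<eta> \<le> r"
    and xy: "x \<in> \<Omega>" "y \<in> \<Omega>" "x \<noteq> y"
    and cx: "norm (x - xbar) < \<eta>" "\<bar>T x - T xbar\<bar> < \<eta>"
    and cy: "norm (y - xbar) < \<eta>" "\<bar>T y - T xbar\<bar> < \<eta>"
    and D: "(T y - T x) * \<epsilon> > 4 * norm (y - x)"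
  shows "\<exists>Q\<in>epi \<Omega> T. \<exists>n. dist Q (xbar, T xbar) < \<epsilon> \<and> norm n = 1 \<and>
            n \<in> proximal_normal (epi \<Omega> T) Q \<and> \<bar>snd n\<bar> < \<epsilon>"
proof -
  define K where "K = epi \<Omega> T"
  define zb where "zb = (xbar, T xbar)"
  define Dl where "Dl = T y - T x"
  define h where "h = y - x"
  define u where "u = (h, Dl / 2)"
  define z where "z = (x, T x)"
  have hpos: "norm h > 0" using xy unfolding h_def by auto
  have ep: "\<epsilon> > 0" using eta by linarith
  have Dpos: "Dl > 0"
  proof -
    have "(T y - T x) * \<epsilon> > 0" using D hpos unfolding h_def by (smt (verit) norm_ge_zero)
    then show ?thesis unfolding Dl_def using ep by (simp add: zero_less_mult_iff)
  qed
  have zbK: "zb \<in> K" unfolding zb_def K_def epi_def using xb by auto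
  have zK: "z \<in> K" unfolding z_def K_def epi_def using xy by auto
  have clK: "closed (K \<inter> cball zb r)" using cl unfolding K_def zb_def .
  have nh: "norm h < 2 * \<eta>" unfolding h_def using cx cy norm_triangle_ineq4[of "y - xbar" "x - xbar"]
    by (simp add: algebra_simps)
  have "Dl < 2 * \<eta>" unfolding Dl_def using cx cy by linarith
  then have nu: "norm u < 3 * \<eta>"
    using norm_Pair_le[of h "Dl/2"] nh Dpos unfolding u_def by simp
  have dz: "dist z zb < 2 * \<eta>"
  proof -
    have "dist z zb = norm (x - xbar, T x - T xbar)" unfolding z_def zb_def by (simp add: dist_norm)
    also have "\<dots> \<le> norm (x - xbar) + norm (T x - T xbar)" by (rule norm_Pair_le)
    finally show ?thesis using cx by simp
  qed
  have dP: "dist (z + s *\<^sub>R u) zb < 5 * \<eta>" if "s \<in> {0..1}" for s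
  proof -
    have "dist (z + s *\<^sub>R u) zb \<le> dist z zb + dist (z + s *\<^sub>R u) z" by (metis dist_triangle dist_commute add.commute)
    also have "dist (z + s *\<^sub>R u) z = s * norm u" using that by (simp add: dist_norm)
    also have "s * norm u \<le> norm u" using that by (simp add: mult_left_le_one_le)
    finally show ?thesis using dz nu by linarith
  qed
  have near: "\<forall>s\<in>{0..1::real}. \<exists>Q\<in>K. \<forall>w\<in>K. dist (z + s *\<^sub>R u) Q \<le> dist (z + s *\<^sub>R u) w"
  proof
    fix s :: real assume s: "s \<in> {0..1}"
    have "dist (z + s *\<^sub>R u) zb < r / 2" using dP[OF s] eta by linarith
    from nearest_exists[OF zbK rp clK this] show "\<exists>Q\<in>K. \<forall>w\<in>K. dist (z + s *\<^sub>R u) Q \<le> dist (z + s *\<^sub>R u) w"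
      by blast
  qed
  have zu: "z + u = (y, T x + Dl / 2)" unfolding z_def u_def h_def by simp
  have "z + u \<notin> K" unfolding zu K_def epi_def Dl_def using Dpos Dl_def by (auto simp: field_simps)
  have "infdist (z + u) K \<noteq> 0"
  proof -
    obtain Q where Q: "Q \<in> K" "\<forall>w\<in>K. dist (z + 1 *\<^sub>R u) Q \<le> dist (z + 1 *\<^sub>R u) w"
      using near by fastforce
    then have "infdist (z + u) K = dist (z + u) Q" using nearest_infdist[OF Q] by simp
    then show ?thesis using Q(1) \<open>z + u \<notin> K\<close> by auto
  qed
  then obtain s Q where sQ: "s \<in> {0..1}" "Q \<in> K" "\<forall>w\<in>K. dist (z + s *\<^sub>R u) Q \<le> dist (z + s *\<^sub>R u) w"
      "z + s *\<^sub>R u \<noteq> Q" "\<not> inner (z + s *\<^sub>R u - Q) u \<le> - norm h * norm (z + s *\<^sub>R u - Q)"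
    using path_lemma[OF zK hpos near] by blast
  define P where "P = z + s *\<^sub>R u"
  define v where "v = P - Q"
  have Pn: "\<forall>w\<in>K. dist P Q \<le> dist P w" using sQ(3) unfolding P_def .
  have vpos: "norm v > 0" using sQ(4) unfolding v_def P_def by auto
  have ip: "inner v u > - norm h * norm v" using sQ(5) unfolding v_def P_def by simp
  define n where "n = (1 / norm v) *\<^sub>R v"
  have nn: "norm n = 1" unfolding n_def using vpos by simp
  have nN: "n \<in> proximal_normal K Q"
    unfolding n_def v_def by (rule normal_scale[OF nearest_normal[OF sQ(2) Pn]]) simp
  have dQ: "dist Q zb < \<epsilon>"
  proof -
    have "dist P Q \<le> dist P zb" using Pn zbK by auto
    then have "dist Q zb \<le> 2 * dist P zb" using dist_triangle[of Q zb P] by (simp add: dist_commute)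
    then show ?thesis using dP[OF sQ(1)] eta unfolding P_def by linarith
  qed
  have sv: "snd v \<le> 0"
  proof (rule ccontr)
    assume b: "\<not> snd v \<le> 0"
    obtain q t where Qqt: "Q = (q, t)" by (cases Q)
    have "q \<in> \<Omega>" "t \<ge> T q" using sQ(2) unfolding Qqt K_def epi_def by auto
    then have wK: "(q, t + snd v) \<in> K" unfolding K_def epi_def using b by auto
    have "P - (q, t + snd v) = (fst v, 0)" unfolding v_def Qqt by (simp add: prod_eq_iff)
    then have "dist P (q, t + snd v) = norm (fst v)" by (simp add: dist_norm)
    also have "\<dots> < norm v"
    proof -
      have "(norm (fst v))\<^sup>2 < (norm (fst v))\<^sup>2 + (snd v)\<^sup>2" using b by simp
      then have "norm (fst v) < sqrt ((norm (fst v))\<^sup>2 + (norm (snd v))\<^sup>2)"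
        by (simp add: real_less_rsqrt)
      then show ?thesis using norm_Pair[of "fst v" "snd v"] by simp
    qed
    finally show False using Pn wK unfolding v_def by (simp add: dist_norm) (smt (verit) Pn wK dist_norm)
  qed
  have sn: "snd n \<le> 0" unfolding n_def using sv vpos by (simp add: divide_nonpos_pos)
  have "inner n u > - norm h"
  proof -
    have "inner n u = inner v u / norm v" unfolding n_def by simp
    moreover have "inner v u / norm v > - norm h" using ip vpos by (simp add: field_simps)
    ultimately show ?thesis by simp
  qed
  moreover have "inner n u = inner (fst n) h + snd n * (Dl / 2)"
    unfolding u_def by (cases n) simp
  moreover have "inner (fst n) h \<le> norm h"
  proof -
    have "inner (fst n) h \<le> norm (fst n) * norm h" by (rule norm_cauchy_schwarz)
    also have "norm (fst n) \<le> 1" using norm_fst_le[of "fst n" "snd n"] nn by simp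
    then have "norm (fst n) * norm h \<le> norm h" using mult_right_mono[of "norm (fst n)" 1 "norm h"] by simp
    finally show ?thesis .
  qed
  ultimately have "- snd n * Dl < 4 * norm h" by linarith
  also have "4 * norm h < Dl * \<epsilon>" using D unfolding Dl_def h_def by simp
  finally have "Dl * (- snd n) < Dl * \<epsilon>" by (simp add: mult.commute)
  then have "- snd n < \<epsilon>" using Dpos mult_less_cancel_left_pos by blast
  then have "\<bar>snd n\<bar> < \<epsilon>" using sn by simp
  then show ?thesis using nn nN dQ sQ(2) unfolding K_def zb_def by blast
qed



lemma eps_step:
  fixes \<Omega> :: "'a::euclidean_space set" and T :: "'a \<Rightarrow> real"
  assumes op: "open \<Omega>" and ct: "continuous_on \<Omega> T" and xb: "xbar \<in> \<Omega>"
    and rp: "r > 0" and cl: "closed (epi \<Omega> T \<inter> cball (xbar, T xbar) r)"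
    and nl: "non_lipschitz_at \<Omega> T xbar" and ep: "\<epsilon> > 0"
  shows "\<exists>Q\<in>epi \<Omega> T. \<exists>n. dist Q (xbar, T xbar) < \<epsilon> \<and> norm n = 1 \<and>
            n \<in> proximal_normal (epi \<Omega> T) Q \<and> \<bar>snd n\<bar> < \<epsilon>"
proof -
  define \<eta> where "\<eta> = min \<epsilon> r / 20"
  have eta: "\<eta> > 0" "20 * \<eta> \<le> \<epsilon>" "20 * \<eta> \<le> r" unfolding \<eta>_def using ep rp by auto
  have "isCont T xbar" using ct op xb continuous_on_eq_continuous_at by blast
  then obtain \<delta> where dl: "\<delta> > 0" "\<And>x'. dist x' xbar < \<delta> \<Longrightarrow> dist (T x') (T xbar) < \<eta>"
    using eta(1) unfolding continuous_at_eps_delta by blast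
  obtain xs ys :: "nat \<Rightarrow> 'a" where seq: "\<forall>i. xs i \<in> \<Omega> \<and> ys i \<in> \<Omega> \<and> xs i \<noteq> ys i"
    "xs \<longlonglongrightarrow> xbar" "ys \<longlonglongrightarrow> xbar"
    and ls: "limsup (\<lambda>i. ereal (\<bar>T (ys i) - T (xs i)\<bar> / norm (ys i - xs i))) = \<infinity>"
    using nl unfolding non_lipschitz_at_def by blast
  define m where "m = min \<delta> \<eta>"
  have mp: "m > 0" unfolding m_def using dl eta by auto
  have ev: "eventually (\<lambda>i. dist (xs i) xbar < m \<and> dist (ys i) xbar < m) sequentially"
    using seq(2,3) mp unfolding tendsto_iff by (simp add: eventually_conj)
  define M where "M = 4 / \<epsilon>"
  have "\<exists>i. dist (xs i) xbar < m \<and> dist (ys i) xbar < m \<and>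
        \<bar>T (ys i) - T (xs i)\<bar> / norm (ys i - xs i) > M"
  proof (rule ccontr)
    assume "\<not> ?thesis"
    then have "eventually (\<lambda>i. ereal (\<bar>T (ys i) - T (xs i)\<bar> / norm (ys i - xs i)) \<le> ereal M) sequentially"
      using ev by (auto elim!: eventually_mono simp: not_less) (meson not_le)
    then have "limsup (\<lambda>i. ereal (\<bar>T (ys i) - T (xs i)\<bar> / norm (ys i - xs i))) \<le> ereal M"
      by (rule Limsup_bounded)
    then show False using ls by simp
  qed
  then obtain i where i: "dist (xs i) xbar < m" "dist (ys i) xbar < m"
    "\<bar>T (ys i) - T (xs i)\<bar> / norm (ys i - xs i) > M" by blast
  define x where "x = xs i"
  define y where "y = ys i"
  have xy: "x \<in> \<Omega>" "y \<in> \<Omega>" "x \<noteq> y" using seq(1) unfolding x_def y_def by auto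
  have cx: "norm (x - xbar) < \<eta>" "\<bar>T x - T xbar\<bar> < \<eta>"
    using i(1) dl(2)[of x] unfolding x_def m_def by (auto simp: dist_norm)
  have cy: "norm (y - xbar) < \<eta>" "\<bar>T y - T xbar\<bar> < \<eta>"
    using i(2) dl(2)[of y] unfolding y_def m_def by (auto simp: dist_norm)
  have np: "norm (y - x) > 0" using xy by auto
  have R: "\<bar>T y - T x\<bar> * \<epsilon> > 4 * norm (y - x)"
  proof -
    have "\<bar>T y - T x\<bar> > M * norm (y - x)" using i(3) np unfolding x_def y_def by (simp add: field_simps)
    then have "\<bar>T y - T x\<bar> * \<epsilon> > (M * norm (y - x)) * \<epsilon>" using ep by simp
    then show ?thesis unfolding M_def using ep by simp
  qed
  show ?thesis
  proof (cases "T y \<ge> T x")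
    case True
    then have "(T y - T x) * \<epsilon> > 4 * norm (y - x)" using R by simp
    then show ?thesis using core_step[OF xb rp cl eta xy cx cy] by blast
  next
    case False
    then have "(T x - T y) * \<epsilon> > 4 * norm (x - y)" using R by (simp add: norm_minus_commute)
    moreover have "y \<noteq> x" using xy by auto
    ultimately show ?thesis using core_step[OF xb rp cl eta xy(2,1) _ cy cx] by blast
  qed
qed



lemma limit_step:
  fixes K :: "('a::euclidean_space \<times> real) set" and \<phi> :: "'a \<times> real \<Rightarrow> real"
  assumes zb: "zb \<in> K" and phic: "continuous_on K \<phi>" and phin: "\<forall>z\<in>K. \<phi> z \<ge> 0"
    and reach: "\<forall>z\<in>K. \<forall>w\<in>K. \<forall>v\<in>proximal_normal K z. inner v (w - z) \<le> \<phi> z * norm v * (norm (w - z))\<^sup>2"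
    and H: "\<forall>\<epsilon>>0. \<exists>Q\<in>K. \<exists>n. dist Q zb < \<epsilon> \<and> norm n = 1 \<and> n \<in> proximal_normal K Q \<and> \<bar>snd n\<bar> < \<epsilon>"
  shows "\<exists>\<zeta>::'a. \<zeta> \<noteq> 0 \<and> (\<zeta>, 0::real) \<in> proximal_normal K zb"
proof -
  have "\<forall>k::nat. \<exists>Q n. Q \<in> K \<and> dist Q zb < 1 / (real k + 1) \<and> norm n = 1 \<and> n \<in> proximal_normal K Q \<and> \<bar>snd n\<bar> < 1 / (real k + 1)"
    using H by (metis divide_pos_pos of_nat_0_le_iff zero_less_one add_nonneg_pos)
  then obtain Qs ns where QN: "\<And>k. Qs k \<in> K" "\<And>k. dist (Qs k) zb < 1 / (real k + 1)" "\<And>k. norm (ns k) = 1"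
     "\<And>k. ns k \<in> proximal_normal K (Qs k)" "\<And>k. \<bar>snd (ns k)\<bar> < 1 / (real k + 1)"
    by metis
  have lim0: "(\<lambda>k. 1 / (real k + 1)) \<longlonglongrightarrow> 0"
    using LIMSEQ_inverse_real_of_nat by (simp add: inverse_eq_divide add.commute)
  have Qlim: "Qs \<longlonglongrightarrow> zb"
  proof -
    have "(\<lambda>k. dist (Qs k) zb) \<longlonglongrightarrow> 0"
      by (rule real_tendsto_sandwich[OF _ _ tendsto_const lim0]) (auto intro!: always_eventually less_imp_le QN(2))
    then show ?thesis using tendsto_dist_iff by blast
  qed
  have slim: "(\<lambda>k. snd (ns k)) \<longlonglongrightarrow> 0"
  proof -
    have "(\<lambda>k. \<bar>snd (ns k)\<bar>) \<longlonglongrightarrow> 0"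
      by (rule real_tendsto_sandwich[OF _ _ tendsto_const lim0]) (auto intro!: always_eventually less_imp_le QN(5))
    then show ?thesis by (simp add: tendsto_rabs_zero_iff)
  qed
  have "bounded (range ns)" using QN(3) by (auto simp: bounded_iff)
  then obtain l r where lr: "strict_mono r" "(ns \<circ> r) \<longlonglongrightarrow> l"
    using bounded_imp_convergent_subsequence by blast
  have "(\<lambda>k. norm ((ns \<circ> r) k)) \<longlonglongrightarrow> norm l" using lr(2) by (rule tendsto_norm)
  then have nl: "norm l = 1" using QN(3) by (simp add: LIMSEQ_const_iff)
  have "(\<lambda>k. snd ((ns \<circ> r) k)) \<longlonglongrightarrow> snd l" using lr(2) by (rule tendsto_snd)
  moreover have "(\<lambda>k. snd ((ns \<circ> r) k)) \<longlonglongrightarrow> 0"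
    using LIMSEQ_subseq_LIMSEQ[OF slim lr(1)] by (simp add: comp_def)
  ultimately have sl: "snd l = 0" using LIMSEQ_unique by blast
  have Qr: "(Qs \<circ> r) \<longlonglongrightarrow> zb" using LIMSEQ_subseq_LIMSEQ[OF Qlim lr(1)] .
  have "inner l (w - zb) \<le> \<phi> zb * (norm (w - zb))\<^sup>2" if w: "w \<in> K" for w
  proof -
    have "(\<lambda>k. inner ((ns \<circ> r) k) (w - (Qs \<circ> r) k)) \<longlonglongrightarrow> inner l (w - zb)"
      by (intro tendsto_intros lr(2) Qr)
    moreover have "(\<lambda>k. \<phi> ((Qs \<circ> r) k) * (norm (w - (Qs \<circ> r) k))\<^sup>2) \<longlonglongrightarrow> \<phi> zb * (norm (w - zb))\<^sup>2"
      by (intro tendsto_intros continuous_on_tendsto_compose[OF phic Qr zb]) (use Qr in \<open>auto simp: QN(1) comp_def\<close>)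
    moreover have "\<forall>k. inner ((ns \<circ> r) k) (w - (Qs \<circ> r) k) \<le> \<phi> ((Qs \<circ> r) k) * (norm (w - (Qs \<circ> r) k))\<^sup>2"
    proof
      fix k
      have "inner (ns (r k)) (w - Qs (r k)) \<le> \<phi> (Qs (r k)) * norm (ns (r k)) * (norm (w - Qs (r k)))\<^sup>2"
        using reach QN(1,4) w by blast
      then show "inner ((ns \<circ> r) k) (w - (Qs \<circ> r) k) \<le> \<phi> ((Qs \<circ> r) k) * (norm (w - (Qs \<circ> r) k))\<^sup>2"
        using QN(3) by simp
    qed
    ultimately show ?thesis by (intro LIMSEQ_le) auto
  qed
  then have lN: "l \<in> proximal_normal K zb" unfolding proximal_normal_def using zb phin
    by (intro CollectI conjI exI[of _ "\<phi> zb"]) auto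
  have "l = (fst l, 0)" using sl by (simp add: prod_eq_iff)
  moreover have "fst l \<noteq> 0" using nl sl by (cases l) auto
  ultimately show ?thesis using lN by metis
qed



lemma easy_dir:
  fixes \<Omega> :: "'a::euclidean_space set" and T :: "'a \<Rightarrow> real"
  assumes op: "open \<Omega>" and xb: "xbar \<in> \<Omega>" and z0: "\<zeta> \<noteq> 0"
    and N: "(\<zeta>, 0::real) \<in> proximal_normal (epi \<Omega> T) (xbar, T xbar)"
  shows "non_lipschitz_at \<Omega> T xbar"
proof -
  obtain \<sigma> where sg: "\<sigma> \<ge> 0" "\<forall>w\<in>epi \<Omega> T. inner (\<zeta>, 0::real) (w - (xbar, T xbar)) \<le> \<sigma> * (norm (w - (xbar, T xbar)))\<^sup>2"
    using N unfolding proximal_normal_def by auto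
  define \<sigma>' where "\<sigma>' = \<sigma> + 1"
  have sp: "\<sigma>' > 0" unfolding \<sigma>'_def using sg by simp
  obtain \<rho> where rh: "\<rho> > 0" "ball xbar \<rho> \<subseteq> \<Omega>" using op xb open_contains_ball by blast
  have nz: "norm \<zeta> > 0" using z0 by simp
  define c where "c = \<rho> / (2 * norm \<zeta>)"
  have cp: "c > 0" unfolding c_def using rh nz by simp
  define s where "s i = c / (real i + 1)" for i :: nat
  have spos: "s i > 0" for i unfolding s_def using cp by simp
  define xs where "xs i = xbar" for i :: nat
  define ys where "ys i = xbar + s i *\<^sub>R \<zeta>" for i
  have slim: "s \<longlonglongrightarrow> 0"
  proof -
    have "(\<lambda>k. 1 / (real k + 1)) \<longlonglongrightarrow> 0"
      using LIMSEQ_inverse_real_of_nat by (simp add: inverse_eq_divide add.commute)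
    then have "(\<lambda>k. c * (1 / (real k + 1))) \<longlonglongrightarrow> c * 0" by (intro tendsto_intros)
    then show ?thesis unfolding s_def by simp
  qed
  have ysin: "ys i \<in> \<Omega>" for i
  proof -
    have "s i \<le> c" unfolding s_def using cp by (simp add: field_simps)
    then have "s i * norm \<zeta> \<le> c * norm \<zeta>" using nz by simp
    also have "c * norm \<zeta> = \<rho> / 2" unfolding c_def using nz by simp
    finally have "dist xbar (ys i) < \<rho>" unfolding ys_def using spos[of i] rh by (simp add: dist_norm)
    then show ?thesis using rh by auto
  qed
  have ylim: "ys \<longlonglongrightarrow> xbar"
  proof -
    have "(\<lambda>i. xbar + s i *\<^sub>R \<zeta>) \<longlonglongrightarrow> xbar + 0 *\<^sub>R \<zeta>" by (intro tendsto_intros slim)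
    then show ?thesis unfolding ys_def by simp
  qed
  define R where "R i = \<bar>T (ys i) - T (xs i)\<bar> / norm (ys i - xs i)" for i
  have key: "\<bar>T (ys i) - T xbar\<bar> > r * (s i * norm \<zeta>)" if "s i * \<sigma>' * (r\<^sup>2 + 1) < 1" for i r
  proof (rule ccontr)
    assume "\<not> ?thesis"
    then have le: "\<bar>T (ys i) - T xbar\<bar> \<le> r * (s i * norm \<zeta>)" by simp
    define D where "D = T (ys i) - T xbar"
    define a where "a = (norm \<zeta>)\<^sup>2"
    have ap: "a > 0" unfolding a_def using nz by simp
    have "(ys i, T (ys i)) \<in> epi \<Omega> T" unfolding epi_def using ysin by auto
    then have "inner (\<zeta>, 0::real) ((ys i, T (ys i)) - (xbar, T xbar)) \<le> \<sigma> * (norm ((ys i, T (ys i)) - (xbar, T xbar)))\<^sup>2"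
      using sg(2) by blast
    moreover have "inner (\<zeta>, 0::real) ((ys i, T (ys i)) - (xbar, T xbar)) = s i * a"
      unfolding ys_def a_def by (simp add: power2_norm_eq_inner)
    moreover have "(norm ((ys i, T (ys i)) - (xbar, T xbar)))\<^sup>2 = (s i)\<^sup>2 * a + D\<^sup>2"
      unfolding ys_def a_def D_def by (simp add: norm_Pair power_mult_distrib)
    ultimately have "s i * a \<le> \<sigma> * ((s i)\<^sup>2 * a + D\<^sup>2)" by simp
    also have "\<dots> \<le> \<sigma>' * ((s i)\<^sup>2 * a + D\<^sup>2)" unfolding \<sigma>'_def using ap by (intro mult_right_mono) auto
    also have "D\<^sup>2 \<le> (r * (s i * norm \<zeta>))\<^sup>2"
      using le unfolding D_def by (metis abs_ge_zero abs_le_square_iff power2_abs order_trans power_mono)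
    then have "\<sigma>' * ((s i)\<^sup>2 * a + D\<^sup>2) \<le> \<sigma>' * ((s i)\<^sup>2 * a + (r * (s i * norm \<zeta>))\<^sup>2)"
      using sp by simp
    also have "\<dots> = (s i * a) * (s i * \<sigma>' * (r\<^sup>2 + 1))"
      unfolding a_def by (simp add: power2_eq_square algebra_simps)
    finally have "(s i * a) * 1 \<le> (s i * a) * (s i * \<sigma>' * (r\<^sup>2 + 1))" by simp
    then have "1 \<le> s i * \<sigma>' * (r\<^sup>2 + 1)" using spos[of i] ap
      by (simp add: mult_le_cancel_left_pos)
    then show False using that by simp
  qed
  have "eventually (\<lambda>i. ereal r < ereal (R i)) sequentially" for r
  proof -
    have "0 < 1 / (\<sigma>' * (r\<^sup>2 + 1))" using sp by (simp add: add_nonneg_pos)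
    from order_tendstoD(2)[OF slim this]
    show ?thesis
    proof (rule eventually_mono)
      fix i assume "s i < 1 / (\<sigma>' * (r\<^sup>2 + 1))"
      moreover have "\<sigma>' * (r\<^sup>2 + 1) > 0" using sp by (simp add: add_nonneg_pos)
      ultimately have "s i * (\<sigma>' * (r\<^sup>2 + 1)) < 1" by (simp add: pos_less_divide_eq)
      then have "s i * \<sigma>' * (r\<^sup>2 + 1) < 1" by (simp add: mult.assoc)
      from key[OF this] have "\<bar>T (ys i) - T xbar\<bar> > r * (s i * norm \<zeta>)" .
      moreover have "norm (ys i - xs i) = s i * norm \<zeta>" unfolding ys_def xs_def using spos[of i] by simp
      ultimately show "ereal r < ereal (R i)" unfolding R_def xs_def using spos[of i] nz
        by (simp add: field_simps)
    qed
  qed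
  then have "(\<lambda>i. ereal (R i)) \<longlonglongrightarrow> \<infinity>" by (simp add: tendsto_PInfty)
  then have "limsup (\<lambda>i. ereal (R i)) = \<infinity>" by (intro lim_imp_Limsup) auto
  moreover have "xs i \<noteq> ys i" for i unfolding xs_def ys_def using spos[of i] z0 by simp
  moreover have "xs \<longlonglongrightarrow> xbar" unfolding xs_def by simp
  moreover have "\<forall>i. xs i \<in> \<Omega> \<and> ys i \<in> \<Omega> \<and> xs i \<noteq> ys i"
    using xb ysin \<open>\<And>i. xs i \<noteq> ys i\<close> unfolding xs_def by blast
  ultimately show ?thesis unfolding non_lipschitz_at_def R_def
    using ylim by blast
qed


theorem proposition3p3:
  fixes \<Omega> :: "'a::euclidean_space set" and T :: "'a \<Rightarrow> real" and xbar :: 'a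
  assumes "open \<Omega>"
    and "continuous_on \<Omega> T"
    and "locally_positive_reach (epi \<Omega> T)"
    and "xbar \<in> \<Omega>"
  shows "non_lipschitz_at \<Omega> T xbar \<longleftrightarrow>
         (\<exists>\<zeta>::'a. \<zeta> \<noteq> 0 \<and> (\<zeta>, 0::real) \<in> proximal_normal (epi \<Omega> T) (xbar, T xbar))"
proof
  assume nl: "non_lipschitz_at \<Omega> T xbar"
  have zb: "(xbar, T xbar) \<in> epi \<Omega> T" unfolding epi_def using assms(4) by auto
  obtain r where r: "r > 0" "closed (epi \<Omega> T \<inter> cball (xbar, T xbar) r)"
    using assms(3) zb unfolding locally_positive_reach_def locally_closed_set_def by blast
  obtain \<phi> where phi: "continuous_on (epi \<Omega> T) \<phi>" "\<forall>z\<in>epi \<Omega> T. \<phi> z \<ge> 0"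
    "\<forall>z\<in>epi \<Omega> T. \<forall>w\<in>epi \<Omega> T. \<forall>v\<in>proximal_normal (epi \<Omega> T) z.
            inner v (w - z) \<le> \<phi> z * norm v * (norm (w - z))\<^sup>2"
    using assms(3) unfolding locally_positive_reach_def by blast
  have H: "\<forall>\<epsilon>>0. \<exists>Q\<in>epi \<Omega> T. \<exists>n. dist Q (xbar, T xbar) < \<epsilon> \<and> norm n = 1 \<and>
            n \<in> proximal_normal (epi \<Omega> T) Q \<and> \<bar>snd n\<bar> < \<epsilon>"
    using eps_step[OF assms(1,2,4) r nl] by blast
  show "\<exists>\<zeta>::'a. \<zeta> \<noteq> 0 \<and> (\<zeta>, 0::real) \<in> proximal_normal (epi \<Omega> T) (xbar, T xbar)"
    by (rule limit_step[OF zb phi H])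
next
  assume "\<exists>\<zeta>::'a. \<zeta> \<noteq> 0 \<and> (\<zeta>, 0::real) \<in> proximal_normal (epi \<Omega> T) (xbar, T xbar)"
  then show "non_lipschitz_at \<Omega> T xbar" using easy_dir[OF assms(1,4)] by blast
qed

end
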